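(* Let $x_0\in\mathbb{R}^2$, $r_0>0$, and let $E$ be a relatively closed subset of $B(x_0,r_0)$ such that $x_0\in E$, $\beta_E(x_0,r_0)\le1/32$, $E$ separates $B(x_0,r_0)$, and $\mathcal{H}^1(E)\le(2+1/8)r_0$. Then there exists a set $\Xi\subset(r_0/16,r_0)$ with $\mathcal{L}^1((r_0/16,r_0)\setminus\Xi)\le r_0/4$ such that for all $\rho\in\Xi$, the set $E\cap\partial B(x_0,\rho)$ consists of exactly two points at distance larger than $\rho$ from each other.
   Context: $B(x,r)$ is the open ball. $\beta_E(x_0,r_0)=r_0^{-1}\inf_\ell\sup_{y\in E\cap B(x_0,r_0)}\mathrm{dist}(y,\ell)$, infimum over lines through $x_0$ (attained); with $\nu$ a unit normal of a minimizing line and $D^\pm_t=\{z\in B(x_0,r_0):\pm(z-x_0)\cdot\nu>t\}$, $E$ separates $B(x_0,r_0)$ if $\beta:=\beta_E(x_0,r_0)\le1/2$ and $D^+_{\beta r_0}$, $D^-_{\beta r_0}$ lie in distinct connected components of $B(x_0,r_0)\setminus E$. *)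

theory Defs
  imports "HOL-Analysis.Analysis"
begin

text \<open>One-dimensional Hausdorff (outer) measure, normalised so that
  H^1 of a segment is its length: the delta-premeasure is the infimum of
  the sums of diameters over countable covers by bounded sets of diameter
  at most delta, and H^1 is the supremum over delta > 0.\<close>

definition hausdorff_pre1 :: "real \<Rightarrow> 'a::metric_space set \<Rightarrow> ennreal" where
  "hausdorff_pre1 \<delta> E =
     (INF C \<in> {C :: nat \<Rightarrow> 'a set. E \<subseteq> (\<Union>i. C i) \<and>
                  (\<forall>i. bounded (C i) \<and> diameter (C i) \<le> \<delta>)}.
        (\<Sum>i. ennreal (diameter (C i))))"

definition hausdorff1 :: "'a::metric_space set \<Rightarrow> ennreal" where
  "hausdorff1 E = (SUP \<delta> \<in> {0<..}. hausdorff_pre1 \<delta> E)"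

definition line_normal :: "real^2 \<Rightarrow> real^2 \<Rightarrow> (real^2) set" where
  "line_normal x0 \<nu> = {z. (z - x0) \<bullet> \<nu> = 0}"

definition beta_num :: "(real^2) set \<Rightarrow> real^2 \<Rightarrow> real \<Rightarrow> real^2 \<Rightarrow> real" where
  "beta_num E x0 r0 \<nu> = Sup ((\<lambda>y. infdist y (line_normal x0 \<nu>)) ` (E \<inter> ball x0 r0))"

definition beta :: "(real^2) set \<Rightarrow> real^2 \<Rightarrow> real \<Rightarrow> real" where
  "beta E x0 r0 = (1 / r0) * Inf (beta_num E x0 r0 ` {\<nu>. norm \<nu> = 1})"

definition half_disk :: "real^2 \<Rightarrow> real \<Rightarrow> real^2 \<Rightarrow> real \<Rightarrow> (real^2) set" where
  "half_disk x0 r0 \<nu> t = {z \<in> ball x0 r0. (z - x0) \<bullet> \<nu> > t}"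

definition separates :: "(real^2) set \<Rightarrow> real^2 \<Rightarrow> real \<Rightarrow> bool" where
  "separates E x0 r0 \<longleftrightarrow>
     beta E x0 r0 \<le> 1/2 \<and>
     (\<exists>\<nu>. norm \<nu> = 1 \<and> beta_num E x0 r0 \<nu> = r0 * beta E x0 r0 \<and>
        (\<exists>C1 C2. C1 \<in> components (ball x0 r0 - E) \<and> C2 \<in> components (ball x0 r0 - E) \<and>
           C1 \<noteq> C2 \<and>
           half_disk x0 r0 \<nu> (beta E x0 r0 * r0) \<subseteq> C1 \<and>
           half_disk x0 r0 (-\<nu>) (beta E x0 r0 * r0) \<subseteq> C2))"

end

theory Submission
  imports Defs
begin

lemma count_cover:
  fixes C :: "nat \<Rightarrow> 'a::metric_space set" and I :: "nat \<Rightarrow> real set"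
  assumes cov: "P \<subseteq> (\<Union>i. C i)" and bd: "\<And>i. bounded (C i)" "\<And>i. diameter (C i) \<le> \<delta>"
    and fin: "finite P" and sep: "\<And>p q. p \<in> P \<Longrightarrow> q \<in> P \<Longrightarrow> p \<noteq> q \<Longrightarrow> dist p q > \<delta>"
    and inI: "\<And>i p. p \<in> C i \<Longrightarrow> p \<in> P \<Longrightarrow> t \<in> I i"
  shows "of_nat (card P) \<le> (\<Sum>i. indicator (I i) t :: ennreal)"
proof -
  define j where "j p = (SOME i. p \<in> C i)" for p
  have jC: "p \<in> C (j p)" if "p \<in> P" for p
  proof -
    from that cov obtain i where "p \<in> C i" by blast
    then show ?thesis unfolding j_def by (rule someI)
  qed
  have inj: "inj_on j P"
  proof (rule inj_onI)
    fix p q assume pq: "p \<in> P" "q \<in> P" "j p = j q"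
    then have "dist p q \<le> diameter (C (j p))"
      using jC[of p] jC[of q] bd(1) by (metis diameter_bounded_bound)
    also have "\<dots> \<le> \<delta>" by (rule bd(2))
    finally show "p = q" using sep[OF pq(1,2)] by force
  qed
  have "(of_nat (card P) :: ennreal) = of_nat (card (j ` P))" by (simp add: card_image inj)
  also have "\<dots> = (\<Sum>i\<in>j ` P. indicator (I i) t)"
  proof -
    have "(\<Sum>i\<in>j ` P. indicator (I i) t :: ennreal) = (\<Sum>i\<in>j ` P. 1)"
      by (rule sum.cong) (use jC inI in \<open>auto simp: indicator_def\<close>)
    then show ?thesis by simp
  qed
  also have "\<dots> \<le> (\<Sum>i. indicator (I i) t)"
    by (rule sum_le_suminf) (auto simp: fin)
  finally show ?thesis .
qed

lemma ennreal_sub_aux: fixes m :: ennreal assumes "ennreal x + m \<le> ennreal y" "x \<ge> 0"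
  shows "m \<le> ennreal (y - x)"
  by (metis add.commute assms(1,2) ennreal_le_minus_iff ennreal_minus)

lemma eilenberg_step:
  fixes E :: "'a::metric_space set" and x0 :: 'a
  assumes dpos: "\<delta> > 0" and epos: "\<epsilon> > 0" and H: "hausdorff1 E \<le> ennreal H" "H \<ge> 0" and lohi: "lo \<le> hi"
    and two: "\<And>t. t \<in> {lo<..<hi} \<Longrightarrow> \<exists>a b. a \<in> E \<and> b \<in> E \<and> dist x0 a = t \<and> dist x0 b = t \<and> dist a b > \<delta>"
  shows "\<exists>M \<in> sets borel. emeasure lborel M \<le> ennreal (H - 2*(hi-lo) + \<epsilon>) \<and>
     (\<forall>t\<in>{lo<..<hi}. \<forall>p q r. p \<in> E \<and> q \<in> E \<and> r \<in> E \<and> dist x0 p = t \<and> dist x0 q = t \<and> dist x0 r = t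
        \<and> dist p q > \<delta> \<and> dist p r > \<delta> \<and> dist q r > \<delta> \<longrightarrow> t \<in> M)"
proof -
  have "hausdorff_pre1 \<delta> E \<le> hausdorff1 E" unfolding hausdorff1_def
    by (rule SUP_upper) (use dpos in auto)
  also have "\<dots> < ennreal (H + \<epsilon>)" using H epos
    by (meson ennreal_lessI le_less_trans less_add_same_cancel1)
  finally have "hausdorff_pre1 \<delta> E < ennreal (H + \<epsilon>)" .
  then obtain C where C: "E \<subseteq> (\<Union>i. C i)" "\<And>i. bounded (C i)" "\<And>i. diameter (C i) \<le> \<delta>"
    and S: "(\<Sum>i. ennreal (diameter (C i))) < ennreal (H + \<epsilon>)"
    unfolding hausdorff_pre1_def by (auto simp: INF_less_iff)
  define f where "f = dist x0"
  define I where "I i = (if C i = {} then {} else {Inf (f ` C i) .. Sup (f ` C i)})" for i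
  define g where "g t = (\<Sum>i. indicator (I i) t :: ennreal)" for t
  have bdda: "bdd_above (f ` C i)" for i
  proof -
    obtain e where "\<forall>y\<in>C i. dist x0 y \<le> e" using bounded_any_center C(2) by blast
    then show ?thesis unfolding f_def by (auto intro: bdd_aboveI2)
  qed
  have bddb: "bdd_below (f ` C i)" for i
    unfolding f_def by (rule bdd_belowI2[of _ 0]) simp
  have inI: "t \<in> I i" if "p \<in> C i" "f p = t" for i p t
    using that bdda[of i] bddb[of i] unfolding I_def
    by (auto intro: cInf_lower cSup_upper)
  have lenI: "emeasure lborel (I i) \<le> ennreal (diameter (C i))" for i
  proof (cases "C i = {}")
    case True then show ?thesis by (simp add: I_def)
  next
    case False
    have lip: "f x \<le> f y + diameter (C i)" if "x \<in> C i" "y \<in> C i" for x y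
    proof -
      have "dist y x \<le> diameter (C i)" using diameter_bounded_bound[OF C(2) that(2,1)] .
      moreover have "dist x0 x \<le> dist x0 y + dist y x" by (rule dist_triangle)
      ultimately show ?thesis unfolding f_def by linarith
    qed
    have "Sup (f ` C i) \<le> Inf (f ` C i) + diameter (C i)"
    proof (rule cSup_least)
      show "f ` C i \<noteq> {}" using False by blast
      fix v assume "v \<in> f ` C i"
      then obtain x where x: "x \<in> C i" "v = f x" by blast
      have "f x - diameter (C i) \<le> Inf (f ` C i)"
        by (rule cInf_greatest) (use False lip[OF x(1)] in \<open>auto simp: algebra_simps\<close>)
      then show "v \<le> Inf (f ` C i) + diameter (C i)" using x by simp
    qed
    then show ?thesis using False unfolding I_def
      by (simp add: emeasure_lborel_Icc_eq ennreal_leI)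
  qed
  have Ib: "I i \<in> sets borel" for i unfolding I_def by simp
  have gmeas: "g \<in> borel_measurable borel"
    unfolding g_def by (rule borel_measurable_suminf_order) (use Ib in simp)
  have intg: "(\<integral>\<^sup>+t. g t \<partial>lborel) \<le> ennreal (H + \<epsilon>)"
  proof -
    have "(\<integral>\<^sup>+t. g t \<partial>lborel) = (\<Sum>i. emeasure lborel (I i))"
      unfolding g_def by (subst nn_integral_suminf) (use Ib in auto)
    also have "\<dots> \<le> (\<Sum>i. ennreal (diameter (C i)))"
      by (rule suminf_le) (use lenI in auto)
    finally show ?thesis using S by simp
  qed
  define A where "A = {lo<..<hi}"
  define M where "M = {t \<in> A. 3 \<le> g t}"
  have Ab: "A \<in> sets borel" unfolding A_def by simp
  have Mb: "M \<in> sets borel" unfolding M_def using gmeas Ab by measurable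
  have cnt: "of_nat (card P) \<le> g t" if "finite P" "P \<subseteq> E" "\<And>p. p \<in> P \<Longrightarrow> dist x0 p = t"
     "\<And>p q. p \<in> P \<Longrightarrow> q \<in> P \<Longrightarrow> p \<noteq> q \<Longrightarrow> dist p q > \<delta>" for P t
    unfolding g_def
    by (rule count_cover[of P C]) (use that C inI in \<open>auto simp: f_def\<close>)
  have low: "2 * indicator A t + indicator M t \<le> g t" for t
  proof (cases "t \<in> A")
    case False then show ?thesis by (simp add: M_def)
  next
    case True
    then obtain a b where ab: "a \<in> E" "b \<in> E" "dist x0 a = t" "dist x0 b = t" "dist a b > \<delta>"
      using two unfolding A_def by blast
    then have "a \<noteq> b" using dpos by auto
    have "of_nat (card {a, b}) \<le> g t"
      by (rule cnt) (use ab in \<open>auto simp: dist_commute\<close>)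
    then have g2: "2 \<le> g t" using \<open>a \<noteq> b\<close> by simp
    show ?thesis
    proof (cases "t \<in> M")
      case True then show ?thesis using \<open>t \<in> A\<close> by (simp add: M_def)
    next
      case False then show ?thesis using \<open>t \<in> A\<close> g2 by simp
    qed
  qed
  have "(\<integral>\<^sup>+t. 2 * indicator A t + indicator M t \<partial>lborel) = 2 * emeasure lborel A + emeasure lborel M"
    using Ab Mb by (simp add: nn_integral_add nn_integral_cmult)
  also have "\<dots> = ennreal (2 * (hi - lo)) + emeasure lborel M"
  proof -
    have "2 * emeasure lborel A = ennreal 2 * ennreal (hi - lo)" using lohi by (simp add: A_def)
    also have "\<dots> = ennreal (2 * (hi - lo))" using lohi by (subst ennreal_mult) auto
    finally show ?thesis by simp
  qed
  finally have "ennreal (2 * (hi - lo)) + emeasure lborel M \<le> ennreal (H + \<epsilon>)"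
    using nn_integral_mono[of lborel "\<lambda>t. 2 * indicator A t + indicator M t" g] low intg
    by (metis (no_types, lifting) order_trans)
  then have "emeasure lborel M \<le> ennreal (H + \<epsilon> - 2 * (hi - lo))"
    by (rule ennreal_sub_aux) (use lohi in simp)
  moreover have "t \<in> M" if "t \<in> A" "p \<in> E" "q \<in> E" "r \<in> E" "dist x0 p = t" "dist x0 q = t" "dist x0 r = t"
        "dist p q > \<delta>" "dist p r > \<delta>" "dist q r > \<delta>" for t p q r
  proof -
    have d: "p \<noteq> q" "p \<noteq> r" "q \<noteq> r" using that dpos by auto
    have "of_nat (card {p, q, r}) \<le> g t"
      by (rule cnt) (use that in \<open>auto simp: dist_commute\<close>)
    then show ?thesis using d that(1) by (simp add: M_def)
  qed
  ultimately show ?thesis using Mb unfolding A_def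
    by (intro bexI[of _ M]) (auto simp: algebra_simps)
qed

lemma unit_comb_norm:
  fixes \<nu> \<tau> :: "'a::real_inner"
  assumes "norm \<nu> = 1" "norm \<tau> = 1" "\<nu> \<bullet> \<tau> = 0"
  shows "norm (cos \<theta> *\<^sub>R \<nu> + sin \<theta> *\<^sub>R \<tau>) = 1"
proof -
  have nn: "\<nu> \<bullet> \<nu> = 1" "\<tau> \<bullet> \<tau> = 1" using assms by (simp_all add: dot_square_norm)
  have "(norm (cos \<theta> *\<^sub>R \<nu> + sin \<theta> *\<^sub>R \<tau>))\<^sup>2 = (cos \<theta>)\<^sup>2 + (sin \<theta>)\<^sup>2"
    unfolding power2_norm_eq_inner using nn assms(3)
    by (simp add: inner_add_left inner_add_right inner_commute power2_eq_square)
  then have "(norm (cos \<theta> *\<^sub>R \<nu> + sin \<theta> *\<^sub>R \<tau>))\<^sup>2 = 1\<^sup>2" by simp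
  then show ?thesis using power2_eq_imp_eq norm_ge_zero zero_le_one by blast
qed

lemma arc_hit:
  fixes x0 \<nu> \<tau> :: "real^2"
  assumes un: "norm \<nu> = 1" "norm \<tau> = 1" "\<nu> \<bullet> \<tau> = 0" and t: "0 < t" "t < r0" "h < t"
   and C: "C1 \<in> components (ball x0 r0 - E)" "C2 \<in> components (ball x0 r0 - E)" "C1 \<noteq> C2"
   and D: "half_disk x0 r0 \<nu> h \<subseteq> C1" "half_disk x0 r0 (-\<nu>) h \<subseteq> C2"
  shows "\<exists>\<theta>\<in>{0..pi}. x0 + t *\<^sub>R (cos \<theta> *\<^sub>R \<nu> + sin \<theta> *\<^sub>R \<tau>) \<in> E"
proof (rule ccontr)
  assume nE: "\<not> ?thesis"
  define \<gamma> where "\<gamma> \<theta> = x0 + t *\<^sub>R (cos \<theta> *\<^sub>R \<nu> + sin \<theta> *\<^sub>R \<tau>)" for \<theta>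
  have dg: "dist x0 (\<gamma> \<theta>) = t" for \<theta>
    unfolding \<gamma>_def dist_norm using unit_comb_norm[OF un, of \<theta>] t by simp
  define T where "T = \<gamma> ` {0..pi}"
  have Tc: "connected T" unfolding T_def \<gamma>_def
    by (intro connected_continuous_image continuous_intros) auto
  have TS: "T \<subseteq> ball x0 r0 - E" using nE dg t unfolding T_def \<gamma>_def[symmetric] by auto
  have nn: "\<nu> \<bullet> \<nu> = 1" using un by (simp add: dot_square_norm)
  have g0: "\<gamma> 0 \<in> C1"
  proof -
    have "\<gamma> 0 \<in> half_disk x0 r0 \<nu> h" unfolding half_disk_def
      using dg[of 0] t nn by (auto simp: \<gamma>_def)
    then show ?thesis using D by blast
  qed
  have gpi: "\<gamma> pi \<in> C2"
  proof -
    have "\<gamma> pi \<in> half_disk x0 r0 (-\<nu>) h" unfolding half_disk_def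
      using dg[of pi] t nn by (auto simp: \<gamma>_def)
    then show ?thesis using D by blast
  qed
  have "T \<subseteq> C1" by (rule components_maximal[OF C(1) Tc TS]) (use g0 in \<open>auto simp: T_def\<close>)
  then have "\<gamma> pi \<in> C1" unfolding T_def by auto
  with gpi components_nonoverlap[OF C(1,2)] C(3) show False by blast
qed

lemma sin_big:
  fixes s c :: real
  assumes "0 \<le> s" "s\<^sup>2 + c\<^sup>2 = 1" "\<bar>c\<bar> < 1/2"
  shows "s > 1/2"
proof (rule ccontr)
  assume "\<not> s > 1/2"
  then have "s * s \<le> 1/2 * (1/2)" using assms(1) by (intro mult_mono) auto
  moreover have "\<bar>c\<bar> * \<bar>c\<bar> < 1/2 * (1/2)" using assms(3)
    by (intro mult_strict_mono) auto
  ultimately show False using assms(2) by (simp add: power2_eq_square abs_mult_self_eq)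
qed

lemma arc_point:
  fixes x0 \<nu> \<tau> a :: "real^2"
  assumes un: "norm \<nu> = 1" "norm \<tau> = 1" "\<nu> \<bullet> \<tau> = 0" and th: "\<theta> \<in> {0..pi}"
    and a: "a = x0 + t *\<^sub>R (cos \<theta> *\<^sub>R \<nu> + sin \<theta> *\<^sub>R \<tau>)"
    and t: "t > 0" and small: "\<bar>(a - x0) \<bullet> \<nu>\<bar> < t/2"
  shows "(a - x0) \<bullet> \<tau> > t/2" "dist x0 a = t"
proof -
  have nn: "\<nu> \<bullet> \<nu> = 1" "\<tau> \<bullet> \<tau> = 1" using un by (simp_all add: dot_square_norm)
  have e1: "(a - x0) \<bullet> \<nu> = t * cos \<theta>" using nn un(3)
    by (simp add: a inner_add_left inner_add_right inner_commute)
  have e2: "(a - x0) \<bullet> \<tau> = t * sin \<theta>" using nn un(3)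
    by (simp add: a inner_add_left inner_add_right inner_commute)
  have "\<bar>cos \<theta>\<bar> < 1/2" using small t unfolding e1 by (simp add: abs_mult)
  moreover have "sin \<theta> \<ge> 0" using th by (auto intro: sin_ge_zero)
  ultimately have "sin \<theta> > 1/2" by (intro sin_big[of _ "cos \<theta>"]) auto
  then show "(a - x0) \<bullet> \<tau> > t/2" unfolding e2 using t by simp
  show "dist x0 a = t"
    unfolding a dist_norm using unit_comb_norm[OF un, of \<theta>] t by simp
qed

lemma liminf_measure:
  fixes M :: "nat \<Rightarrow> real set"
  assumes M1: "\<And>n. M n \<in> sets borel" and M2: "\<And>n. emeasure lborel (M n) \<le> ennreal (c + 1 / real (Suc n))"
    and c: "c \<ge> 0"
  shows "(\<Union>m. \<Inter>k\<in>{m..}. M k) \<in> sets borel \<and> emeasure lborel (\<Union>m. \<Inter>k\<in>{m..}. M k) \<le> ennreal c"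
proof -
  note M = M1 M2
  define K where "K m = (\<Inter>k\<in>{m..}. M k)" for m
  define N where "N = (\<Union>m. K m)"
  have Kb: "K m \<in> sets borel" for m
    unfolding K_def by (rule sets.countable_INT'') (simp_all add: M(1))
  have Kle: "emeasure lborel (K m) \<le> ennreal (c)" for m
  proof -
    have le: "emeasure lborel (K m) \<le> ennreal (c + 1 / real (Suc k))" if "k \<ge> m" for k
    proof -
      have "K m \<subseteq> M k" unfolding K_def using that by auto
      then have "emeasure lborel (K m) \<le> emeasure lborel (M k)" by (rule emeasure_mono) (use M(1) in simp)
      also have "\<dots> \<le> ennreal (c + 1 / real (Suc k))" by (rule M(2))
      finally show ?thesis .
    qed
    have fin: "emeasure lborel (K m) \<noteq> top"
    proof -
      have "emeasure lborel (K m) \<le> ennreal (c + 1 / real (Suc m))" using le[of m] by simp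
      then show ?thesis by (rule neq_top_trans[OF ennreal_neq_top])
    qed
    define w where "w = measure lborel (K m)"
    have w: "emeasure lborel (K m) = ennreal w" unfolding w_def by (rule emeasure_eq_ennreal_measure[OF fin])
    have "w \<le> c"
    proof (rule ccontr)
      assume "\<not> w \<le> c"
      then obtain k where k: "inverse (real (Suc k)) < w - c" using reals_Archimedean[of "w - c"] by auto
      have "ennreal w \<le> ennreal (c + 1 / real (Suc (k + m)))" using le[of "k + m"] w by simp
      moreover have pos: "0 \<le> c + 1 / real (Suc (k + m))" using c by simp
      ultimately have "w \<le> c + 1 / real (Suc (k + m))" by (metis ennreal_le_iff)
      moreover have "1 / real (Suc (k + m)) \<le> inverse (real (Suc k))"
        by (simp add: inverse_eq_divide frac_le)
      ultimately show False using k by simp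
    qed
    then show ?thesis using w by (simp add: ennreal_leI)
  qed
  have inc: "incseq K" unfolding incseq_def K_def by (intro allI impI INT_anti_mono) auto
  have Nb: "N \<in> sets borel" unfolding N_def using Kb by auto
  have Nle: "emeasure lborel N \<le> ennreal (c)"
  proof -
    have "emeasure lborel N = (SUP m. emeasure lborel (K m))"
      unfolding N_def by (rule SUP_emeasure_incseq[symmetric]) (use Kb inc in auto)
    also have "\<dots> \<le> ennreal (c)" by (rule SUP_least) (rule Kle)
    finally show ?thesis .
  qed
  show ?thesis using Nb Nle unfolding N_def K_def by simp
qed

theorem lemma4p29:
  fixes x0 :: "real^2" and r0 :: real and E :: "(real^2) set"
  assumes "r0 > 0"
    and "E \<subseteq> ball x0 r0" and "closedin (top_of_set (ball x0 r0)) E"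
    and "x0 \<in> E"
    and "beta E x0 r0 \<le> 1/32"
    and "separates E x0 r0"
    and "hausdorff1 E \<le> ennreal ((2 + 1/8) * r0)"
  shows "\<exists>\<Xi>. \<Xi> \<subseteq> {r0/16<..<r0} \<and>
           (\<exists>N \<in> sets lebesgue. {r0/16<..<r0} - \<Xi> \<subseteq> N \<and> emeasure lebesgue N \<le> ennreal (r0/4)) \<and>
           (\<forall>\<rho>\<in>\<Xi>. \<exists>a b. E \<inter> sphere x0 \<rho> = {a, b} \<and> dist a b > \<rho>)"
proof -
  define h where "h = beta E x0 r0 * r0"
  from assms(6) obtain \<nu> C1 C2 where nu: "norm \<nu> = 1" and bn: "beta_num E x0 r0 \<nu> = r0 * beta E x0 r0"
    and C: "C1 \<in> components (ball x0 r0 - E)" "C2 \<in> components (ball x0 r0 - E)" "C1 \<noteq> C2"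
    and D: "half_disk x0 r0 \<nu> h \<subseteq> C1" "half_disk x0 r0 (-\<nu>) h \<subseteq> C2"
    unfolding separates_def h_def by blast
  have hle: "h \<le> r0/32" unfolding h_def using assms(1,5)
    using mult_right_mono[of "beta E x0 r0" "1/32" r0] by simp
  have Ebd: "\<bar>(y - x0) \<bullet> \<nu>\<bar> \<le> h" if y: "y \<in> E" for y
  proof -
    let ?L = "line_normal x0 \<nu>"
    have x0L: "x0 \<in> ?L" by (simp add: line_normal_def)
    have Lne: "?L \<noteq> {}" using x0L by blast
    have "\<bar>(y - x0) \<bullet> \<nu>\<bar> \<le> infdist y ?L"
      unfolding infdist_notempty[OF Lne]
    proof (rule cINF_greatest)
      show "?L \<noteq> {}" using x0L by blast
      fix z assume "z \<in> ?L"
      then have "(z - x0) \<bullet> \<nu> = 0" by (simp add: line_normal_def)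
      then have "(y - x0) \<bullet> \<nu> = (y - z) \<bullet> \<nu>"
      proof -
        have "(y - x0) \<bullet> \<nu> = (y - z) \<bullet> \<nu> + (z - x0) \<bullet> \<nu>" by (simp add: inner_diff_left)
        then show ?thesis using \<open>(z - x0) \<bullet> \<nu> = 0\<close> by simp
      qed
      also have "\<bar>\<dots>\<bar> \<le> norm (y - z) * norm \<nu>" by (rule Cauchy_Schwarz_ineq2)
      finally show "\<bar>(y - x0) \<bullet> \<nu>\<bar> \<le> dist y z" using nu by (simp add: dist_norm)
    qed
    also have "infdist y ?L \<le> beta_num E x0 r0 \<nu>" unfolding beta_num_def
    proof (rule cSup_upper)
      show "infdist y ?L \<in> (\<lambda>y. infdist y ?L) ` (E \<inter> ball x0 r0)" using y assms(2) by blast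
      show "bdd_above ((\<lambda>y. infdist y ?L) ` (E \<inter> ball x0 r0))"
      proof (rule bdd_aboveI2)
        fix z assume "z \<in> E \<inter> ball x0 r0"
        then have "dist z x0 < r0" by (simp add: dist_commute)
        then show "infdist z ?L \<le> r0" using infdist_le[OF x0L, of z] by linarith
      qed
    qed
    also have "\<dots> = h" using bn by (simp add: h_def mult.commute)
    finally show ?thesis .
  qed
  have "2 \<le> DIM(real^2)" by simp
  then obtain \<tau>0 :: "real^2" where t0: "\<tau>0 \<noteq> 0" "orthogonal \<nu> \<tau>0"
    using orthogonal_to_vector_exists by blast
  define \<tau> where "\<tau> = \<tau>0 /\<^sub>R norm \<tau>0"
  have tau: "norm \<tau> = 1" "\<nu> \<bullet> \<tau> = 0" using t0 unfolding \<tau>_def orthogonal_def by auto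
  have tau': "norm (-\<tau>) = 1" "\<nu> \<bullet> (-\<tau>) = 0" using tau by auto
  have two: "\<exists>a b. a \<in> E \<and> b \<in> E \<and> dist x0 a = t \<and> dist x0 b = t \<and> dist a b > t"
    if tA: "t \<in> {r0/16<..<r0}" for t
  proof -
    have t: "0 < t" "t < r0" "h < t" using hle tA assms(1) by auto
    obtain \<theta>1 where th1: "\<theta>1 \<in> {0..pi}" "x0 + t *\<^sub>R (cos \<theta>1 *\<^sub>R \<nu> + sin \<theta>1 *\<^sub>R \<tau>) \<in> E"
      using arc_hit[OF nu tau t C D] by blast
    obtain \<theta>2 where th2: "\<theta>2 \<in> {0..pi}" "x0 + t *\<^sub>R (cos \<theta>2 *\<^sub>R \<nu> + sin \<theta>2 *\<^sub>R (-\<tau>)) \<in> E"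
      using arc_hit[OF nu tau' t C D] by blast
    define a where "a = x0 + t *\<^sub>R (cos \<theta>1 *\<^sub>R \<nu> + sin \<theta>1 *\<^sub>R \<tau>)"
    define b where "b = x0 + t *\<^sub>R (cos \<theta>2 *\<^sub>R \<nu> + sin \<theta>2 *\<^sub>R (-\<tau>))"
    have aE: "a \<in> E" and bE: "b \<in> E" using th1 th2 a_def b_def by auto
    have sa: "\<bar>(a - x0) \<bullet> \<nu>\<bar> < t/2" using Ebd[OF aE] hle tA by auto
    have sb: "\<bar>(b - x0) \<bullet> \<nu>\<bar> < t/2" using Ebd[OF bE] hle tA by auto
    note pa = arc_point[OF nu tau th1(1) a_def t(1) sa]
    note pb = arc_point[OF nu tau' th2(1) b_def t(1) sb]
    have "(a - b) \<bullet> \<tau> = (a - x0) \<bullet> \<tau> - (b - x0) \<bullet> \<tau>" by (simp add: inner_diff_left)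
    also have "\<dots> > t" using pa(1) pb(1) by simp
    finally have "t < (a - b) \<bullet> \<tau>" .
    also have "\<dots> \<le> norm (a - b) * norm \<tau>" by (rule norm_cauchy_schwarz)
    finally have "t < dist a b" using tau by (simp add: dist_norm)
    then show ?thesis using aE bE pa(2) pb(2) by blast
  qed
  define A where "A = {r0/16<..<r0}"
  define \<delta> where "\<delta> n = min (1 / real (Suc n)) (r0/16)" for n :: nat
  have dpos: "\<delta> n > 0" for n unfolding \<delta>_def using assms(1) by simp
  have Mex: "\<exists>M. M \<in> sets borel \<and> emeasure lborel M \<le> ennreal (r0/4 + 1 / real (Suc n)) \<and>
     (\<forall>t\<in>A. \<forall>p q r. p \<in> E \<and> q \<in> E \<and> r \<in> E \<and> dist x0 p = t \<and> dist x0 q = t \<and> dist x0 r = t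
        \<and> dist p q > \<delta> n \<and> dist p r > \<delta> n \<and> dist q r > \<delta> n \<longrightarrow> t \<in> M)" for n
  proof -
    have "\<exists>M \<in> sets borel. emeasure lborel M \<le> ennreal ((2 + 1/8) * r0 - 2*(r0 - r0/16) + 1 / real (Suc n)) \<and>
     (\<forall>t\<in>{r0/16<..<r0}. \<forall>p q r. p \<in> E \<and> q \<in> E \<and> r \<in> E \<and> dist x0 p = t \<and> dist x0 q = t \<and> dist x0 r = t
        \<and> dist p q > \<delta> n \<and> dist p r > \<delta> n \<and> dist q r > \<delta> n \<longrightarrow> t \<in> M)"
    (is ?ex)
    proof (rule eilenberg_step[OF dpos _ assms(7)])
      show "(2 + 1/8) * r0 \<ge> 0" using assms(1) by simp
      show "r0/16 \<le> r0" using assms(1) by simp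
      show "0 < 1 / real (Suc n)" by simp
      fix t assume tA: "t \<in> {r0/16<..<r0}"
      then obtain a b where ab: "a \<in> E" "b \<in> E" "dist x0 a = t" "dist x0 b = t" "dist a b > t"
        using two by blast
      have "\<delta> n \<le> r0/16" unfolding \<delta>_def by simp
      then have "dist a b > \<delta> n" using ab(5) tA by simp
      then show "\<exists>a b. a \<in> E \<and> b \<in> E \<and> dist x0 a = t \<and> dist x0 b = t \<and> dist a b > \<delta> n"
        using ab by blast
    qed
    moreover have eq: "(2 + 1/8) * r0 - 2*(r0 - r0/16) + 1 / real (Suc n) = r0/4 + 1 / real (Suc n)" by simp
    ultimately show ?thesis unfolding A_def by (simp only: eq Bex_def)
  qed
  have "\<forall>n. \<exists>M. M \<in> sets borel \<and> emeasure lborel M \<le> ennreal (r0/4 + 1 / real (Suc n)) \<and>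
     (\<forall>t\<in>A. \<forall>p q r. p \<in> E \<and> q \<in> E \<and> r \<in> E \<and> dist x0 p = t \<and> dist x0 q = t \<and> dist x0 r = t
        \<and> dist p q > \<delta> n \<and> dist p r > \<delta> n \<and> dist q r > \<delta> n \<longrightarrow> t \<in> M)" by (intro allI Mex)
  from choice[OF this] obtain M where Mall: "\<forall>n. M n \<in> sets borel \<and> emeasure lborel (M n) \<le> ennreal (r0/4 + 1 / real (Suc n)) \<and>
     (\<forall>t\<in>A. \<forall>p q r. p \<in> E \<and> q \<in> E \<and> r \<in> E \<and> dist x0 p = t \<and> dist x0 q = t \<and> dist x0 r = t
        \<and> dist p q > \<delta> n \<and> dist p r > \<delta> n \<and> dist q r > \<delta> n \<longrightarrow> t \<in> M n)" by (rule exE)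
  have M: "\<And>n. M n \<in> sets borel" "\<And>n. emeasure lborel (M n) \<le> ennreal (r0/4 + 1 / real (Suc n))"
    using conjunct1[OF spec[OF Mall]] conjunct1[OF conjunct2[OF spec[OF Mall]]] by auto
  have M3: "t \<in> M n" if "t \<in> A" "p \<in> E" "q \<in> E" "r \<in> E" "dist x0 p = t" "dist x0 q = t" "dist x0 r = t"
        "dist p q > \<delta> n" "dist p r > \<delta> n" "dist q r > \<delta> n" for n t p q r
  proof -
    have "\<forall>t\<in>A. \<forall>p q r. p \<in> E \<and> q \<in> E \<and> r \<in> E \<and> dist x0 p = t \<and> dist x0 q = t \<and> dist x0 r = t
        \<and> dist p q > \<delta> n \<and> dist p r > \<delta> n \<and> dist q r > \<delta> n \<longrightarrow> t \<in> M n"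
      by (rule conjunct2[OF conjunct2[OF spec[OF Mall, of n]]])
    from this[rule_format, of t p q r] that show ?thesis by blast
  qed
  define K where "K m = (\<Inter>k\<in>{m..}. M k)" for m
  define N where "N = (\<Union>m. K m)"
  have NN: "N \<in> sets borel \<and> emeasure lborel N \<le> ennreal (r0/4)"
    unfolding N_def K_def by (rule liminf_measure) (use M assms(1) in auto)
  have Nb: "N \<in> sets borel" using NN by blast
  have Nle: "emeasure lborel N \<le> ennreal (r0/4)" using NN by blast
  define \<Xi> where "\<Xi> = {t \<in> A. \<exists>a b. E \<inter> sphere x0 t = {a, b} \<and> dist a b > t}"
  have AN: "A - \<Xi> \<subseteq> N"
  proof
    fix t assume t: "t \<in> A - \<Xi>"
    then obtain a b where ab: "a \<in> E" "b \<in> E" "dist x0 a = t" "dist x0 b = t" "dist a b > t"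
      using two unfolding A_def by blast
    have tA: "t \<in> A" using t by blast
    have "E \<inter> sphere x0 t \<noteq> {a, b}"
    proof
      assume eqab: "E \<inter> sphere x0 t = {a, b}"
      have ex: "\<exists>a' b'. E \<inter> sphere x0 t = {a', b'} \<and> dist a' b' > t"
        by (intro exI conjI) (rule eqab, rule ab(5))
      have "t \<in> \<Xi>" using tA ex unfolding \<Xi>_def by (intro CollectI conjI)
      with t show False by blast
    qed
    moreover have "{a, b} \<subseteq> E \<inter> sphere x0 t" using ab by auto
    ultimately have "\<not> E \<inter> sphere x0 t \<subseteq> {a, b}" using subset_antisym by metis
    then obtain c where "c \<in> E \<inter> sphere x0 t" "c \<notin> {a, b}" unfolding subset_iff by blast
    then have c: "c \<in> E" "dist x0 c = t" "c \<noteq> a" "c \<noteq> b" by auto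
    have tpos: "t > 0" using t assms(1) unfolding A_def by auto
    define d where "d = min (dist a b) (min (dist a c) (dist b c))"
    have "a \<noteq> b" using ab(5) tpos by auto
    then have "d > 0" unfolding d_def using c(3,4) by (simp add: zero_less_dist_iff eq_commute)
    have dd: "d \<le> dist a b" "d \<le> dist a c" "d \<le> dist b c" unfolding d_def by auto
    obtain m where m: "inverse (real (Suc m)) < d" using reals_Archimedean[OF \<open>d > 0\<close>] by blast
    have "t \<in> M k" if "k \<ge> m" for k
    proof -
      have "\<delta> k \<le> 1 / real (Suc k)" unfolding \<delta>_def by simp
      also have "\<dots> \<le> inverse (real (Suc m))" using that by (simp add: inverse_eq_divide frac_le)
      finally have dk: "\<delta> k < d" using m by simp
      show ?thesis
        by (rule M3[OF tA ab(1,2) c(1) ab(3,4) c(2)]) (use dd dk in linarith)+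
    qed
    then have "t \<in> K m" unfolding K_def by auto
    then show "t \<in> N" unfolding N_def by auto
  qed
  show ?thesis
  proof (intro exI[of _ \<Xi>] conjI)
    show "\<Xi> \<subseteq> {r0/16<..<r0}" unfolding \<Xi>_def A_def by auto
    show "\<exists>N \<in> sets lebesgue. {r0/16<..<r0} - \<Xi> \<subseteq> N \<and> emeasure lebesgue N \<le> ennreal (r0/4)"
    proof (intro bexI[of _ N] conjI)
      show "N \<in> sets lebesgue" using Nb by simp
      show "{r0/16<..<r0} - \<Xi> \<subseteq> N" using AN unfolding A_def .
      show "emeasure lebesgue N \<le> ennreal (r0/4)" using Nb Nle by simp
    qed
    show "\<forall>\<rho>\<in>\<Xi>. \<exists>a b. E \<inter> sphere x0 \<rho> = {a, b} \<and> dist a b > \<rho>" unfolding \<Xi>_def by auto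
  qed
qed

end
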